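(* Let $\mathbf A$ be the adjacency matrix of a directed stochastic block model with edge-probability matrix $\mathbf P$, and for distinct $i_1,i_2\in[n]$ let $$M(i_1,i_2)=\frac1{n-2}\left|\sum_{j\in[n]\setminus\{i_1,i_2\}}(A_{i_1j}-P_{i_1j})(A_{i_2j}-P_{i_2j})\right|.$$ Then for any $\epsilon_m>0$, $$\mathbb P\left(\max_{i_1\ne i_2}M(i_1,i_2)<\epsilon_m\right)\ge1-n(n-1)\exp\left(-\frac{\frac12(n-2)\epsilon_m^2}{1+\frac13\epsilon_m}\right),$$ and, for $n\ge4$, the right-hand side is at least $1-n(n-1)\exp\left(-\frac{\frac14n\epsilon_m^2}{1+\epsilon_m}\right)$.
   Context: Model: nodes $[n]$, $K_n$ communities, community-probability vector $\boldsymbol\rho$, block matrix $\mathbf B\in[0,1]^{K_n\times K_n}$, sparsity factor $\gamma_n\in(0,1]$. Labels $Z_1,\dots,Z_n$ i.i.d. Categorical$(\boldsymbol\rho)$, $\pi(i)=Z_i$. Conditionally on the labels, $A_{ij}$ ($i\ne j$) are independent Bernoulli$(\gamma_nB_{\pi(i)\pi(j)})$, $A_{ii}=0$; $\mathbf A$ need not be symmetric. $P_{ij}=\gamma_nB_{\pi(i)\pi(j)}$ for all $i,j$. *)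

theory Defs
  imports "HOL-Probability.Probability"
begin

definition sbm_labels :: "nat \<Rightarrow> nat pmf \<Rightarrow> (nat \<Rightarrow> nat) pmf" where
  "sbm_labels n \<rho> = Pi_pmf {..<n} 0 (\<lambda>_. \<rho>)"

definition sbm_P :: "real \<Rightarrow> (nat \<Rightarrow> nat \<Rightarrow> real) \<Rightarrow> (nat \<Rightarrow> nat) \<Rightarrow> nat \<Rightarrow> nat \<Rightarrow> real" where
  "sbm_P \<gamma> B Z i j = \<gamma> * B (Z i) (Z j)"

definition sbm_adj :: "nat \<Rightarrow> real \<Rightarrow> (nat \<Rightarrow> nat \<Rightarrow> real) \<Rightarrow> (nat \<Rightarrow> nat)
    \<Rightarrow> (nat \<times> nat \<Rightarrow> bool) pmf" where
  "sbm_adj n \<gamma> B Z = Pi_pmf ({..<n} \<times> {..<n}) False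
     (\<lambda>(i,j). if i = j then return_pmf False else bernoulli_pmf (sbm_P \<gamma> B Z i j))"

definition sbm_pmf :: "nat \<Rightarrow> nat pmf \<Rightarrow> (nat \<Rightarrow> nat \<Rightarrow> real) \<Rightarrow> real
    \<Rightarrow> ((nat \<Rightarrow> nat) \<times> (nat \<times> nat \<Rightarrow> bool)) pmf" where
  "sbm_pmf n \<rho> B \<gamma> =
     bind_pmf (sbm_labels n \<rho>) (\<lambda>Z. map_pmf (\<lambda>A. (Z, A)) (sbm_adj n \<gamma> B Z))"

definition sbm_M :: "nat \<Rightarrow> real \<Rightarrow> (nat \<Rightarrow> nat \<Rightarrow> real) \<Rightarrow> (nat \<Rightarrow> nat)
    \<Rightarrow> (nat \<times> nat \<Rightarrow> bool) \<Rightarrow> nat \<Rightarrow> nat \<Rightarrow> real" where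
  "sbm_M n \<gamma> B Z A i1 i2 =
     1 / (real n - 2) *
     \<bar>\<Sum>j\<in>{..<n} - {i1, i2}.
        (of_bool (A (i1, j)) - sbm_P \<gamma> B Z i1 j) * (of_bool (A (i2, j)) - sbm_P \<gamma> B Z i2 j)\<bar>"

end

theory Submission
  imports Defs
begin

lemma key:
  fixes I :: "(nat \<times> nat) set" and J :: "nat set" and D :: "nat \<times> nat \<Rightarrow> bool pmf"
    and p :: "nat \<times> nat \<Rightarrow> real" and t :: real
  assumes finI: "finite I" and finJ: "finite J" and Jne: "J \<noteq> {}" and neq: "i1 \<noteq> i2"
    and inI: "\<And>j. j \<in> J \<Longrightarrow> (i1, j) \<in> I \<and> (i2, j) \<in> I"
    and D: "\<And>j i. j \<in> J \<Longrightarrow> i \<in> {i1, i2} \<Longrightarrow> D (i, j) = bernoulli_pmf (p (i, j)) \<and> 0 \<le> p (i, j) \<and> p (i, j) \<le> 1"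
    and t: "0 \<le> t"
  shows "measure_pmf.prob (Pi_pmf I False D)
     {A. t \<le> \<bar>\<Sum>j\<in>J. (of_bool (A (i1, j)) - p (i1, j)) * (of_bool (A (i2, j)) - p (i2, j))\<bar>}
     \<le> 2 * exp (- 2 * t\<^sup>2 / (4 * real (card J)))"
proof -
  define Q where "Q = Pi_pmf I False D"
  have PS: "prob_space (measure_pmf Q)" by (rule measure_pmf.prob_space_axioms)
  define K where "K j = {(i1, j), (i2, j)}" for j :: nat
  define h where "h k b = (of_bool b - p k :: real)" for k b
  define X where "X j A = h (i1, j) (A (i1, j)) * h (i2, j) (A (i2, j))" for j A
  have ind0: "prob_space.indep_vars (measure_pmf Q) (\<lambda>_. count_space UNIV) (\<lambda>x f. f x) I"
    unfolding Q_def by (rule indep_vars_Pi_pmf[OF finI])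
  have ind1: "prob_space.indep_vars (measure_pmf Q) (\<lambda>j. PiM (K j) (\<lambda>_. count_space UNIV))
        (\<lambda>j \<omega>. restrict (\<lambda>i. \<omega> i) (K j)) J"
  proof (rule prob_space.indep_vars_restrict[OF PS ind0])
    show "K j \<subseteq> I" if "j \<in> J" for j using inI[OF that] by (simp add: K_def)
    show "disjoint_family_on K J" by (auto simp: disjoint_family_on_def K_def)
  qed
  have meas: "(\<lambda>f. h (i1, j) (f (i1, j)) * h (i2, j) (f (i2, j)))
      \<in> borel_measurable (PiM (K j) (\<lambda>_. count_space UNIV))" for j
  proof -
    have c: "(\<lambda>f. f k) \<in> measurable (PiM (K j) (\<lambda>_. count_space UNIV)) (count_space UNIV)"
      if "k \<in> K j" for k using that by (rule measurable_component_singleton)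
    have hm: "(h k) \<in> borel_measurable (count_space UNIV)" for k by (rule borel_measurable_count_space)
    have "(\<lambda>f. h (i1, j) (f (i1, j))) \<in> borel_measurable (PiM (K j) (\<lambda>_. count_space UNIV))"
      by (rule measurable_compose[OF c hm]) (simp add: K_def)
    moreover have "(\<lambda>f. h (i2, j) (f (i2, j))) \<in> borel_measurable (PiM (K j) (\<lambda>_. count_space UNIV))"
      by (rule measurable_compose[OF c hm]) (simp add: K_def)
    ultimately show ?thesis by (rule borel_measurable_times)
  qed
  have ind2: "prob_space.indep_vars (measure_pmf Q) (\<lambda>_. borel) X J"
  proof -
    have "prob_space.indep_vars (measure_pmf Q) (\<lambda>_. borel)
        (\<lambda>j \<omega>. (\<lambda>f. h (i1, j) (f (i1, j)) * h (i2, j) (f (i2, j))) (restrict (\<lambda>i. \<omega> i) (K j))) J"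
      by (rule prob_space.indep_vars_compose2[OF PS ind1 meas])
    moreover have "(\<lambda>j \<omega>. (\<lambda>f. h (i1, j) (f (i1, j)) * h (i2, j) (f (i2, j))) (restrict (\<lambda>i. \<omega> i) (K j))) = X"
      by (auto simp: K_def X_def fun_eq_iff)
    ultimately show ?thesis by simp
  qed
  have hb: "\<bar>h (i, j) b\<bar> \<le> 1" if "j \<in> J" "i \<in> {i1, i2}" for i j b
    using D[OF that] by (auto simp: h_def)
  have Xb: "X j A \<in> {-1..1}" if "j \<in> J" for j A
  proof -
    have "\<bar>X j A\<bar> \<le> 1" unfolding X_def abs_mult
      using hb[OF that, of i1] hb[OF that, of i2]
      by (intro mult_le_one) auto
    thus ?thesis by auto
  qed
  have EX: "measure_pmf.expectation Q (X j) = 0" if j: "j \<in> J" for j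
  proof -
    have ind3a: "prob_space.indep_vars (measure_pmf Q) (\<lambda>_. borel) (\<lambda>k \<omega>. h k (\<omega> k)) I"
      by (rule prob_space.indep_vars_compose2[OF PS ind0]) (rule borel_measurable_count_space)
    have KI: "K j \<subseteq> I" using inI[OF j] by (simp add: K_def)
    have ind3: "prob_space.indep_vars (measure_pmf Q) (\<lambda>_. borel) (\<lambda>k \<omega>. h k (\<omega> k)) (K j)"
      by (rule prob_space.indep_vars_subset[OF PS ind3a KI])
    have int: "integrable Q (\<lambda>\<omega>. h k (\<omega> k))" if "k \<in> K j" for k
    proof -
      have b: "\<bar>h k b\<bar> \<le> 1" for b using that hb[OF j] by (auto simp: K_def)
      show ?thesis
        by (rule measure_pmf.integrable_const_bound[where B=1]) (use b in auto)
    qed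
    have comp: "measure_pmf.expectation Q (\<lambda>\<omega>. h k (\<omega> k)) = 0" if "k \<in> K j" for k
    proof -
      have "measure_pmf.expectation Q (\<lambda>\<omega>. h k (\<omega> k)) = measure_pmf.expectation (map_pmf (\<lambda>f. f k) Q) (h k)"
        by simp
      also have "map_pmf (\<lambda>f. f k) Q = D k"
        unfolding Q_def using Pi_pmf_component[OF finI, of k False D] that KI by auto
      also have "D k = bernoulli_pmf (p k)" using D[OF j] that by (auto simp: K_def)
      finally have e: "measure_pmf.expectation Q (\<lambda>\<omega>. h k (\<omega> k)) = measure_pmf.expectation (bernoulli_pmf (p k)) (h k)" .
      have pk: "0 \<le> p k" "p k \<le> 1" using D[OF j] that by (auto simp: K_def)
      show ?thesis unfolding e using pk by (simp add: h_def algebra_simps)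
    qed
    have "measure_pmf.expectation Q (X j) = measure_pmf.expectation Q (\<lambda>\<omega>. \<Prod>k\<in>K j. h k (\<omega> k))"
      using neq by (simp add: X_def[abs_def] K_def)
    also have "\<dots> = (\<Prod>k\<in>K j. measure_pmf.expectation Q (\<lambda>\<omega>. h k (\<omega> k)))"
      by (rule prob_space.indep_vars_lebesgue_integral[OF PS _ ind3 int]) (auto simp: K_def)
    also have "\<dots> = 0" using comp neq by (simp add: K_def)
    finally show ?thesis .
  qed
  interpret H: Hoeffding_ineq "measure_pmf Q" J X "\<lambda>_. -1" "\<lambda>_. 1" 0
    by unfold_locales (use finJ ind2 Xb EX in auto)
  have "measure_pmf.prob Q {x\<in>space (measure_pmf Q). \<bar>(\<Sum>i\<in>J. X i x) - 0\<bar> \<ge> t} \<le> 2 * exp (-2 * t\<^sup>2 / (\<Sum>i\<in>J. (1 - (-1))\<^sup>2))"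
    by (rule H.Hoeffding_ineq_abs_ge[OF t]) (use finJ Jne in auto)
  thus ?thesis by (simp add: Q_def X_def h_def)
qed

lemma sum_lessThan_real: "(\<Sum>i<n. real i) = real n * (real n - 1) / 2"
  by (induction n) (auto simp: algebra_simps)

lemma per_Z:
  fixes n :: nat and B :: "nat \<Rightarrow> nat \<Rightarrow> real" and \<gamma> \<epsilon> :: real and Z :: "nat \<Rightarrow> nat"
  assumes n3: "3 \<le> n" and eps: "0 < \<epsilon>"
    and Pb: "\<And>i j. i < n \<Longrightarrow> j < n \<Longrightarrow> 0 \<le> sbm_P \<gamma> B Z i j \<and> sbm_P \<gamma> B Z i j \<le> 1"
  shows "measure_pmf.prob (sbm_adj n \<gamma> B Z)
     {A. \<exists>i1<n. \<exists>i2<n. i1 \<noteq> i2 \<and> \<epsilon> \<le> sbm_M n \<gamma> B Z A i1 i2}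
     \<le> real n * (real n - 1) * exp (- ((real n - 2) * \<epsilon>^2 / 2))"
proof -
  define S where "S i1 i2 A = (\<Sum>j\<in>{..<n} - {i1, i2}.
        (of_bool (A (i1, j)) - sbm_P \<gamma> B Z i1 j) * (of_bool (A (i2, j)) - sbm_P \<gamma> B Z i2 j))"
    for i1 i2 and A :: "nat \<times> nat \<Rightarrow> bool"
  define E where "E i1 i2 = {A. (real n - 2) * \<epsilon> \<le> \<bar>S i1 i2 A\<bar>}" for i1 i2
  define q where "q = exp (- ((real n - 2) * \<epsilon>^2 / 2))"
  define Q where "Q = sbm_adj n \<gamma> B Z"
  have n2: "real n - 2 > 0" using n3 by simp
  have Ssym: "S i1 i2 A = S i2 i1 A" for i1 i2 A
    unfolding S_def by (simp add: insert_commute mult.commute)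
  have ME: "\<epsilon> \<le> sbm_M n \<gamma> B Z A i1 i2 \<Longrightarrow> A \<in> E i1 i2" for A i1 i2
  proof -
    assume a: "\<epsilon> \<le> sbm_M n \<gamma> B Z A i1 i2"
    have "sbm_M n \<gamma> B Z A i1 i2 = \<bar>S i1 i2 A\<bar> / (real n - 2)"
      by (simp add: sbm_M_def S_def)
    with a n2 show ?thesis by (simp add: E_def pos_le_divide_eq mult.commute)
  qed
  have sub: "{A. \<exists>i1<n. \<exists>i2<n. i1 \<noteq> i2 \<and> \<epsilon> \<le> sbm_M n \<gamma> B Z A i1 i2}
      \<subseteq> (\<Union>i2\<in>{..<n}. \<Union>i1\<in>{..<i2}. E i1 i2)"
  proof
    fix A assume "A \<in> {A. \<exists>i1<n. \<exists>i2<n. i1 \<noteq> i2 \<and> \<epsilon> \<le> sbm_M n \<gamma> B Z A i1 i2}"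
    then obtain i1 i2 where i: "i1 < n" "i2 < n" "i1 \<noteq> i2" "A \<in> E i1 i2" using ME by blast
    show "A \<in> (\<Union>i2\<in>{..<n}. \<Union>i1\<in>{..<i2}. E i1 i2)"
    proof (cases "i1 < i2")
      case True thus ?thesis using i by blast
    next
      case False
      hence "i2 < i1" using i by simp
      moreover have "A \<in> E i2 i1" using i(4) by (simp add: E_def Ssym)
      ultimately show ?thesis using i by blast
    qed
  qed
  have PE: "measure_pmf.prob Q (E i1 i2) \<le> 2 * q" if i: "i1 < i2" "i2 < n" for i1 i2
  proof -
    define J where "J = {..<n} - {i1, i2}"
    have cJ: "card J = n - 2" unfolding J_def using i by (subst card_Diff_subset) auto
    have Jne: "J \<noteq> {}" using cJ n3 by auto
    have "measure_pmf.prob (Pi_pmf ({..<n} \<times> {..<n}) False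
        (\<lambda>(i,j). if i = j then return_pmf False else bernoulli_pmf (sbm_P \<gamma> B Z i j)))
     {A. (real n - 2) * \<epsilon> \<le> \<bar>\<Sum>j\<in>J. (of_bool (A (i1, j)) - (\<lambda>(i,j). sbm_P \<gamma> B Z i j) (i1, j)) *
          (of_bool (A (i2, j)) - (\<lambda>(i,j). sbm_P \<gamma> B Z i j) (i2, j))\<bar>}
     \<le> 2 * exp (- 2 * ((real n - 2) * \<epsilon>)\<^sup>2 / (4 * real (card J)))"
    proof (rule key)
      show "finite J" by (simp add: J_def)
      show "(i1, j) \<in> {..<n} \<times> {..<n} \<and> (i2, j) \<in> {..<n} \<times> {..<n}" if "j \<in> J" for j
        using that i by (auto simp: J_def)
      show "(\<lambda>(i,j). if i = j then return_pmf False else bernoulli_pmf (sbm_P \<gamma> B Z i j)) (i, j) =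
          bernoulli_pmf ((\<lambda>(i,j). sbm_P \<gamma> B Z i j) (i, j)) \<and>
          0 \<le> (\<lambda>(i,j). sbm_P \<gamma> B Z i j) (i, j) \<and> (\<lambda>(i,j). sbm_P \<gamma> B Z i j) (i, j) \<le> 1"
        if "j \<in> J" "i \<in> {i1, i2}" for i j
        using that i Pb[of i j] by (auto simp: J_def)
    qed (use i n2 eps Jne in auto)
    also have "- 2 * ((real n - 2) * \<epsilon>)\<^sup>2 / (4 * real (card J)) = - ((real n - 2) * \<epsilon>^2 / 2)"
      using cJ n3 n2 by (simp add: of_nat_diff power2_eq_square field_simps)
    finally show ?thesis
      by (simp add: Q_def sbm_adj_def E_def S_def J_def q_def)
  qed
  have "measure_pmf.prob Q {A. \<exists>i1<n. \<exists>i2<n. i1 \<noteq> i2 \<and> \<epsilon> \<le> sbm_M n \<gamma> B Z A i1 i2}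
      \<le> measure_pmf.prob Q (\<Union>i2\<in>{..<n}. \<Union>i1\<in>{..<i2}. E i1 i2)"
    by (rule measure_pmf.finite_measure_mono[OF sub]) simp
  also have "\<dots> \<le> (\<Sum>i2<n. measure_pmf.prob Q (\<Union>i1\<in>{..<i2}. E i1 i2))"
    by (rule measure_pmf.finite_measure_subadditive_finite) auto
  also have "\<dots> \<le> (\<Sum>i2<n. \<Sum>i1<i2. measure_pmf.prob Q (E i1 i2))"
    by (intro sum_mono measure_pmf.finite_measure_subadditive_finite) auto
  also have "\<dots> \<le> (\<Sum>i2<n. \<Sum>i1<i2. 2 * q)"
    by (intro sum_mono PE) auto
  also have "\<dots> = 2 * q * (\<Sum>i2<n. real i2)"
    by (simp add: sum_distrib_left mult.commute[of _ "2 * q"])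
  also have "\<dots> = real n * (real n - 1) * q"
    by (simp add: sum_lessThan_real)
  finally show ?thesis by (simp add: Q_def q_def)
qed

theorem lemma6:
  fixes n K :: nat and \<rho> :: "nat pmf" and B :: "nat \<Rightarrow> nat \<Rightarrow> real"
    and \<gamma> \<epsilon> :: real
  assumes "set_pmf \<rho> \<subseteq> {..<K}"
    and "\<forall>k<K. \<forall>l<K. 0 \<le> B k l \<and> B k l \<le> 1"
    and "0 < \<gamma>" and "\<gamma> \<le> 1"
    and "0 < \<epsilon>"
  shows "(measure_pmf.prob (sbm_pmf n \<rho> B \<gamma>)
           {(Z, A). \<forall>i1<n. \<forall>i2<n. i1 \<noteq> i2 \<longrightarrow> sbm_M n \<gamma> B Z A i1 i2 < \<epsilon>}
         \<ge> 1 - real n * (real n - 1) * exp (- ((1/2) * (real n - 2) * \<epsilon>^2) / (1 + \<epsilon>/3))) \<and>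
         (4 \<le> n \<longrightarrow>
         1 - real n * (real n - 1) * exp (- ((1/2) * (real n - 2) * \<epsilon>^2) / (1 + \<epsilon>/3))
         \<ge> 1 - real n * (real n - 1) * exp (- ((1/4) * real n * \<epsilon>^2) / (1 + \<epsilon>)))"
proof -
  define e where "e = exp (- ((1/2) * (real n - 2) * \<epsilon>^2) / (1 + \<epsilon>/3))"
  define G where "G = {(Z, A). \<forall>i1<n. \<forall>i2<n. i1 \<noteq> i2 \<longrightarrow> sbm_M n \<gamma> B Z A i1 i2 < \<epsilon>}"
  have nn: "real n * (real n - 1) \<ge> 0" by (cases n) auto
  have part2: "4 \<le> n \<longrightarrow> 1 - real n * (real n - 1) * e
         \<ge> 1 - real n * (real n - 1) * exp (- ((1/4) * real n * \<epsilon>^2) / (1 + \<epsilon>))"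
  proof
    assume n4: "4 \<le> n"
    have "(1/4) * real n * \<epsilon>^2 / (1 + \<epsilon>) \<le> (1/2) * (real n - 2) * \<epsilon>^2 / (1 + \<epsilon>/3)"
    proof (rule frac_le)
      show "(1/4) * real n * \<epsilon>^2 \<le> (1/2) * (real n - 2) * \<epsilon>^2"
        using n4 by (intro mult_right_mono) auto
    qed (use assms(5) n4 in auto)
    hence "- ((1/2) * (real n - 2) * \<epsilon>^2) / (1 + \<epsilon>/3) \<le> - ((1/4) * real n * \<epsilon>^2) / (1 + \<epsilon>)"
      by simp
    hence "e \<le> exp (- ((1/4) * real n * \<epsilon>^2) / (1 + \<epsilon>))" unfolding e_def by simp
    thus "1 - real n * (real n - 1) * e
         \<ge> 1 - real n * (real n - 1) * exp (- ((1/4) * real n * \<epsilon>^2) / (1 + \<epsilon>))"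
      using nn by (simp add: mult_left_mono)
  qed
  have part1: "measure_pmf.prob (sbm_pmf n \<rho> B \<gamma>) G \<ge> 1 - real n * (real n - 1) * e"
  proof (cases "n \<le> 2")
    case True
    have "G = UNIV"
    proof -
      have em: "{..<n} - {i1, i2} = {}" if "i1 < n" "i2 < n" "i1 \<noteq> i2" for i1 i2
        using that True by auto
      have "sbm_M n \<gamma> B Z A i1 i2 = 0" if "i1 < n" "i2 < n" "i1 \<noteq> i2" for Z A i1 i2
        unfolding sbm_M_def em[OF that] by simp
      thus ?thesis using assms(5) by (auto simp: G_def)
    qed
    hence "measure_pmf.prob (sbm_pmf n \<rho> B \<gamma>) G = 1" by simp
    moreover have "e \<ge> 0" by (simp add: e_def)
    ultimately show ?thesis using nn by simp
  next
    case False
    hence n3: "3 \<le> n" by simp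
    define Bad where "Bad = {(Z, A). \<exists>i1<n. \<exists>i2<n. i1 \<noteq> i2 \<and> \<epsilon> \<le> sbm_M n \<gamma> B Z A i1 i2}"
    define c where "c = real n * (real n - 1) * exp (- ((real n - 2) * \<epsilon>^2 / 2))"
    have c0: "c \<ge> 0" using nn by (simp add: c_def)
    have GB0: "(Z, A) \<in> G \<longleftrightarrow> (Z, A) \<notin> Bad" for Z A
      unfolding G_def Bad_def by (simp only: mem_Collect_eq prod.case not_le not_ex not_all de_Morgan_conj imp_conv_disj not_not disj_commute)
    have GB: "G = UNIV - Bad"
    proof (rule set_eqI)
      fix x show "x \<in> G \<longleftrightarrow> x \<in> UNIV - Bad" using GB0[of "fst x" "snd x"] by simp
    qed
    have perZ: "measure_pmf.prob (map_pmf (\<lambda>A. (Z, A)) (sbm_adj n \<gamma> B Z)) Bad \<le> c"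
      if Z: "Z \<in> set_pmf (sbm_labels n \<rho>)" for Z
    proof -
      have Zi: "Z i < K" if "i < n" for i
      proof -
        have "Z i \<in> set_pmf \<rho>"
          using Z that by (auto simp: sbm_labels_def set_Pi_pmf PiE_dflt_def)
        thus ?thesis using assms(1) by auto
      qed
      have Pb: "0 \<le> sbm_P \<gamma> B Z i j \<and> sbm_P \<gamma> B Z i j \<le> 1" if "i < n" "j < n" for i j
      proof -
        have "0 \<le> B (Z i) (Z j)" "B (Z i) (Z j) \<le> 1" using assms(2) Zi[OF that(1)] Zi[OF that(2)] by auto
        thus ?thesis using assms(3,4) by (auto simp: sbm_P_def intro: mult_le_one)
      qed
      have "(\<lambda>A. (Z, A)) -` Bad = {A. \<exists>i1<n. \<exists>i2<n. i1 \<noteq> i2 \<and> \<epsilon> \<le> sbm_M n \<gamma> B Z A i1 i2}"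
        by (auto simp: Bad_def)
      thus ?thesis using per_Z[OF n3 assms(5) Pb] by (simp add: c_def)
    qed
    have "emeasure (measure_pmf (sbm_pmf n \<rho> B \<gamma>)) Bad =
       (\<integral>\<^sup>+Z. emeasure (measure_pmf (map_pmf (\<lambda>A. (Z, A)) (sbm_adj n \<gamma> B Z))) Bad \<partial>measure_pmf (sbm_labels n \<rho>))"
      by (simp add: sbm_pmf_def)
    also have "\<dots> \<le> (\<integral>\<^sup>+Z. ennreal c \<partial>measure_pmf (sbm_labels n \<rho>))"
    proof (rule nn_integral_mono_AE)
      show "AE Z in measure_pmf (sbm_labels n \<rho>).
          emeasure (measure_pmf (map_pmf (\<lambda>A. (Z, A)) (sbm_adj n \<gamma> B Z))) Bad \<le> ennreal c"
        using perZ by (intro AE_pmfI) (simp add: measure_pmf.emeasure_eq_measure ennreal_leI del: measure_map_pmf emeasure_map_pmf)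
    qed
    also have "\<dots> = ennreal c" by (simp add: measure_pmf.emeasure_space_1)
    finally have "ennreal (measure_pmf.prob (sbm_pmf n \<rho> B \<gamma>) Bad) \<le> ennreal c"
      by (simp add: measure_pmf.emeasure_eq_measure)
    hence PB: "measure_pmf.prob (sbm_pmf n \<rho> B \<gamma>) Bad \<le> c" using c0 by simp
    have "c \<le> real n * (real n - 1) * e"
    proof -
      have "- ((real n - 2) * \<epsilon>^2 / 2) \<le> - ((1/2) * (real n - 2) * \<epsilon>^2) / (1 + \<epsilon>/3)"
      proof -
        have x0: "0 \<le> (1/2) * (real n - 2) * \<epsilon>^2" using n3 by simp
        have "(1/2) * (real n - 2) * \<epsilon>^2 / (1 + \<epsilon>/3) \<le> (1/2) * (real n - 2) * \<epsilon>^2"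
          using divide_left_mono[of 1 "1 + \<epsilon>/3" "(1/2) * (real n - 2) * \<epsilon>^2"] x0 assms(5) by simp
        thus ?thesis by simp
      qed
      thus ?thesis unfolding c_def e_def using nn by (intro mult_left_mono) auto
    qed
    moreover have "measure_pmf.prob (sbm_pmf n \<rho> B \<gamma>) G = 1 - measure_pmf.prob (sbm_pmf n \<rho> B \<gamma>) Bad"
      unfolding GB using measure_pmf.prob_compl[of Bad "sbm_pmf n \<rho> B \<gamma>"] by simp
    ultimately show ?thesis using PB by simp
  qed
  show ?thesis using part1 part2 unfolding e_def G_def by blast
qed

end
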